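(* Let $V$ be a unitary irreducible lowest weight representation of $\hat{G}_{\Lambda,\Lambda_F}$ with lowest weight $h$. If $\dot I,\dot J$ are sequences and $\lambda_1,\lambda_2,\lambda_3,\lambda_4\in\{1,\dots,\Lambda_F\}$ satisfy $\dot I\lambda_1\lambda_3>\dot J\lambda_2\lambda_4$, then $h_I(\lambda_2;\dot J;\lambda_4)-h_I(\lambda_1;\dot I;\lambda_3)$ is a non-negative integer.
   Context: Fix positive integers $\Lambda,\Lambda_F$. A sequence $\dot I=i_1\cdots i_a$ is a finite, possibly empty, sequence of integers in $\{1,\dots,\Lambda\}$; $\#(\dot I)=a$, juxtaposition denotes concatenation, and $\delta^{\dot I}_{\dot J}$ is $1$ if $\dot I=\dot J$ and $0$ otherwise (similarly for integers). Let $\mathcal{T}_o$ be the complex vector space with basis the symbols $\bar\phi^{\lambda_1}\otimes s^{\dot K}\otimes\phi^{\lambda_2}$, $1\le\lambda_1,\lambda_2\le\Lambda_F$, $\dot K$ any sequence. For all sequences $\dot I,\dot J$ and all $\lambda_i\in\{1,\dots,\Lambda_F\}$ define linear operators on $\mathcal{T}_o$: first kind: $\bar\Xi^{\lambda_1}_{\lambda_2}\otimes f^{\dot I}_{\dot J}\otimes\Xi^{\lambda_3}_{\lambda_4}(\bar\phi^{\lambda_5}\otimes s^{\dot K}\otimes\phi^{\lambda_6})=\delta^{\lambda_5}_{\lambda_2}\delta^{\dot K}_{\dot J}\delta^{\lambda_6}_{\lambda_4}\,\bar\phi^{\lambda_1}\otimes s^{\dot I}\otimes\phi^{\lambda_3}$;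 second kind: $\bar\Xi^{\lambda_1}_{\lambda_2}\otimes l^{\dot I}_{\dot J}(\bar\phi^{\lambda_3}\otimes s^{\dot K}\otimes\phi^{\lambda_4})=\delta^{\lambda_3}_{\lambda_2}\sum_{\dot K_1\dot K_2=\dot K}\delta^{\dot K_1}_{\dot J}\,\bar\phi^{\lambda_1}\otimes s^{\dot I\dot K_2}\otimes\phi^{\lambda_4}$; third kind: $r^{\dot I}_{\dot J}\otimes\Xi^{\lambda_1}_{\lambda_2}(\bar\phi^{\lambda_3}\otimes s^{\dot K}\otimes\phi^{\lambda_4})=\delta^{\lambda_4}_{\lambda_2}\sum_{\dot K_1\dot K_2=\dot K}\delta^{\dot K_2}_{\dot J}\,\bar\phi^{\lambda_3}\otimes s^{\dot K_1\dot I}\otimes\phi^{\lambda_1}$; fourth kind: $\sigma^{\dot I}_{\dot J}(\bar\phi^{\lambda_1}\otimes s^{\dot K}\otimes\phi^{\lambda_2})=\sum_{\dot K_1\dot K_2\dot K_3=\dot K}\delta^{\dot K_2}_{\dot J}\,\bar\phi^{\lambda_1}\otimes s^{\dot K_1\dot I\dot K_3}\otimes\phi^{\lambda_2}$; sums over all ways to write $\dot K$ as a concatenation of possibly empty sequences. The open string algebra $\hat{G}_{\Lambda,\Lambda_F}$ is the Lie algebra (commutator bracket) of operators on $\mathcal{T}_o$ spanned by these operators. Ordering: for finite sequences of positive integers $a=a_1\cdots a_m$, $b=b_1\cdots b_n$, $a>b$ means $m>n$, or $m=n\ne0$ and $a_r>b_r$ at the first index $r$ where they differ (applied to concatenations like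 $\dot I\lambda_1\lambda_3$). $G^{00}$ is the span of all $\bar\Xi^{\lambda_1}_{\lambda_1}\otimes f^{\dot I}_{\dot I}\otimes\Xi^{\lambda_2}_{\lambda_2}$, $\bar\Xi^{\lambda}_{\lambda}\otimes l^{\dot I}_{\dot I}$, $r^{\dot I}_{\dot I}\otimes\Xi^{\lambda}_{\lambda}$, $\sigma^{\dot I}_{\dot I}$. $G^-$ is the span of all operators of the four kinds with $\#(\dot I)<\#(\dot J)$, together with those with $\#(\dot I)=\#(\dot J)$ and $\dot J\lambda_2\lambda_4>\dot I\lambda_1\lambda_3$ (first kind), $\dot J\lambda_2>\dot I\lambda_1$ (second and third kind), $\dot J>\dot I$ (fourth kind). $\omega$ is the antilinear anti-involution swapping upper and lower indices: $\omega(\bar\Xi^{\lambda_1}_{\lambda_2}\otimes f^{\dot I}_{\dot J}\otimes\Xi^{\lambda_3}_{\lambda_4})=\bar\Xi^{\lambda_2}_{\lambda_1}\otimes f^{\dot J}_{\dot I}\otimes\Xi^{\lambda_4}_{\lambda_3}$, $\omega(\bar\Xi^{\lambda_1}_{\lambda_2}\otimes l^{\dot I}_{\dot J})=\bar\Xi^{\lambda_2}_{\lambda_1}\otimes l^{\dot J}_{\dot I}$, $\omega(r^{\dot I}_{\dot J}\otimes\Xi^{\lambda_1}_{\lambda_2})=r^{\dot J}_{\dot I}\otimes\Xi^{\lambda_2}_{\lambda_1}$, $\omega(\sigma^{\dot I}_{\dot J})=\sigma^{\dot J}_{\dot I}$. A lowest weight $h$ is a linear functional on $G^{00}$ real on the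 spanning operators; $h_I(\lambda_1;\dot I;\lambda_2)$ denotes its value on $\bar\Xi^{\lambda_1}_{\lambda_1}\otimes f^{\dot I}_{\dot I}\otimes\Xi^{\lambda_2}_{\lambda_2}$. A unitary lowest weight representation with lowest weight $h$ is a representation $V$ generated by a vector $v\ne0$ with $G^-v=0$ and $Hv=h(H)v$ for $H\in G^{00}$, carrying a positive definite Hermitian form with $\langle Xu,w\rangle=\langle u,\omega(X)w\rangle$ for all $X$. *)

theory Defs
  imports Complex_Main
begin

text \<open>Basis symbols of T_o: (lambda1, K, lambda2) stands for
  phibar^lambda1 (x) s^K (x) phi^lambda2.  Sequences are lists of naturals.\<close>

type_synonym bidx = "nat \<times> nat list \<times> nat"

text \<open>Operators on T_o are represented by their (column- and row-finite) matrices
  w.r.t. the basis: M out in is the coefficient of basis vector out in M(in).\<close>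

type_synonym opmat = "bidx \<Rightarrow> bidx \<Rightarrow> complex"

definition valid_seq :: "nat \<Rightarrow> nat list \<Rightarrow> bool" where
  "valid_seq L K \<longleftrightarrow> set K \<subseteq> {1..L}"

definition valid_idx :: "nat \<Rightarrow> nat \<Rightarrow> bidx \<Rightarrow> bool" where
  "valid_idx L LF x \<longleftrightarrow> (case x of (a, K, b) \<Rightarrow> a \<in> {1..LF} \<and> b \<in> {1..LF} \<and> valid_seq L K)"

text \<open>First kind: Xibar^l1_l2 (x) f^I_J (x) Xi^l3_l4.\<close>
definition opF :: "nat \<Rightarrow> nat \<Rightarrow> nat \<Rightarrow> nat \<Rightarrow> nat list \<Rightarrow> nat list \<Rightarrow> nat \<Rightarrow> nat \<Rightarrow> opmat" where
  "opF L LF l1 l2 I J l3 l4 = (\<lambda>(a, M, b) (c, K, d).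
     if valid_idx L LF (a, M, b) \<and> valid_idx L LF (c, K, d)
        \<and> c = l2 \<and> K = J \<and> d = l4 \<and> a = l1 \<and> M = I \<and> b = l3 then 1 else 0)"

text \<open>Second kind: Xibar^l1_l2 (x) l^I_J.\<close>
definition opL :: "nat \<Rightarrow> nat \<Rightarrow> nat \<Rightarrow> nat \<Rightarrow> nat list \<Rightarrow> nat list \<Rightarrow> opmat" where
  "opL L LF l1 l2 I J = (\<lambda>(a, M, b) (c, K, d).
     if valid_idx L LF (a, M, b) \<and> valid_idx L LF (c, K, d)
        \<and> c = l2 \<and> a = l1 \<and> b = d
     then of_nat (card {(K1, K2). K = K1 @ K2 \<and> K1 = J \<and> M = I @ K2}) else 0)"

text \<open>Third kind: r^I_J (x) Xi^l1_l2.\<close>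
definition opR :: "nat \<Rightarrow> nat \<Rightarrow> nat list \<Rightarrow> nat list \<Rightarrow> nat \<Rightarrow> nat \<Rightarrow> opmat" where
  "opR L LF I J l1 l2 = (\<lambda>(a, M, b) (c, K, d).
     if valid_idx L LF (a, M, b) \<and> valid_idx L LF (c, K, d)
        \<and> d = l2 \<and> b = l1 \<and> a = c
     then of_nat (card {(K1, K2). K = K1 @ K2 \<and> K2 = J \<and> M = K1 @ I}) else 0)"

text \<open>Fourth kind: sigma^I_J.\<close>
definition opS :: "nat \<Rightarrow> nat \<Rightarrow> nat list \<Rightarrow> nat list \<Rightarrow> opmat" where
  "opS L LF I J = (\<lambda>(a, M, b) (c, K, d).
     if valid_idx L LF (a, M, b) \<and> valid_idx L LF (c, K, d) \<and> a = c \<and> b = d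
     then of_nat (card {(K1, K2, K3). K = K1 @ K2 @ K3 \<and> K2 = J \<and> M = K1 @ I @ K3}) else 0)"

definition mmul :: "opmat \<Rightarrow> opmat \<Rightarrow> opmat" where
  "mmul A B = (\<lambda>x z. \<Sum>y\<in>{y. B y z \<noteq> 0}. A x y * B y z)"

definition brk :: "opmat \<Rightarrow> opmat \<Rightarrow> opmat" where
  "brk A B = (\<lambda>x z. mmul A B x z - mmul B A x z)"

definition cspan :: "opmat set \<Rightarrow> opmat set" where
  "cspan S = {M. \<exists>F c. finite F \<and> F \<subseteq> S \<and> M = (\<lambda>x y. \<Sum>g\<in>F. c g * g x y)}"

definition gens :: "nat \<Rightarrow> nat \<Rightarrow> opmat set" where
  "gens L LF =
     {opF L LF l1 l2 I J l3 l4 | l1 l2 I J l3 l4.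
        l1 \<in> {1..LF} \<and> l2 \<in> {1..LF} \<and> l3 \<in> {1..LF} \<and> l4 \<in> {1..LF} \<and> valid_seq L I \<and> valid_seq L J}
   \<union> {opL L LF l1 l2 I J | l1 l2 I J. l1 \<in> {1..LF} \<and> l2 \<in> {1..LF} \<and> valid_seq L I \<and> valid_seq L J}
   \<union> {opR L LF I J l1 l2 | l1 l2 I J. l1 \<in> {1..LF} \<and> l2 \<in> {1..LF} \<and> valid_seq L I \<and> valid_seq L J}
   \<union> {opS L LF I J | I J. valid_seq L I \<and> valid_seq L J}"

definition Ghat :: "nat \<Rightarrow> nat \<Rightarrow> opmat set" where
  "Ghat L LF = cspan (gens L LF)"

definition seq_gt :: "nat list \<Rightarrow> nat list \<Rightarrow> bool" where
  "seq_gt a b \<longleftrightarrow> length a > length b \<or>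
     (length a = length b \<and> a \<noteq> [] \<and> (\<exists>r < length a. take r a = take r b \<and> a ! r > b ! r))"

definition G00_gens :: "nat \<Rightarrow> nat \<Rightarrow> opmat set" where
  "G00_gens L LF =
     {opF L LF l1 l1 I I l2 l2 | l1 l2 I. l1 \<in> {1..LF} \<and> l2 \<in> {1..LF} \<and> valid_seq L I}
   \<union> {opL L LF l l I I | l I. l \<in> {1..LF} \<and> valid_seq L I}
   \<union> {opR L LF I I l l | l I. l \<in> {1..LF} \<and> valid_seq L I}
   \<union> {opS L LF I I | I. valid_seq L I}"

definition G00 :: "nat \<Rightarrow> nat \<Rightarrow> opmat set" where
  "G00 L LF = cspan (G00_gens L LF)"

definition Gminus :: "nat \<Rightarrow> nat \<Rightarrow> opmat set" where
  "Gminus L LF = cspan (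
     {opF L LF l1 l2 I J l3 l4 | l1 l2 I J l3 l4.
        l1 \<in> {1..LF} \<and> l2 \<in> {1..LF} \<and> l3 \<in> {1..LF} \<and> l4 \<in> {1..LF} \<and> valid_seq L I \<and> valid_seq L J
        \<and> (length I < length J \<or> (length I = length J \<and> seq_gt (J @ [l2, l4]) (I @ [l1, l3])))}
   \<union> {opL L LF l1 l2 I J | l1 l2 I J. l1 \<in> {1..LF} \<and> l2 \<in> {1..LF} \<and> valid_seq L I \<and> valid_seq L J
        \<and> (length I < length J \<or> (length I = length J \<and> seq_gt (J @ [l2]) (I @ [l1])))}
   \<union> {opR L LF I J l1 l2 | l1 l2 I J. l1 \<in> {1..LF} \<and> l2 \<in> {1..LF} \<and> valid_seq L I \<and> valid_seq L J
        \<and> (length I < length J \<or> (length I = length J \<and> seq_gt (J @ [l2]) (I @ [l1])))}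
   \<union> {opS L LF I J | I J. valid_seq L I \<and> valid_seq L J
        \<and> (length I < length J \<or> (length I = length J \<and> seq_gt J I))})"

text \<open>The anti-involution omega: on the generators it swaps upper and lower indices,
  which is exactly the conjugate transpose of the matrix; it is antilinear.\<close>
definition omega :: "opmat \<Rightarrow> opmat" where
  "omega M = (\<lambda>x y. cnj (M y x))"

definition lowest_weight :: "nat \<Rightarrow> nat \<Rightarrow> (opmat \<Rightarrow> complex) \<Rightarrow> bool" where
  "lowest_weight L LF h \<longleftrightarrow>
     (\<forall>X\<in>G00 L LF. \<forall>Y\<in>G00 L LF. \<forall>a b. h (\<lambda>x y. a * X x y + b * Y x y) = a * h X + b * h Y)
     \<and> (\<forall>H\<in>G00_gens L LF. h H \<in> \<real>)"

definition hI :: "nat \<Rightarrow> nat \<Rightarrow> (opmat \<Rightarrow> complex) \<Rightarrow> nat \<Rightarrow> nat list \<Rightarrow> nat \<Rightarrow> complex" where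
  "hI L LF h l1 I l2 = h (opF L LF l1 l1 I I l2 l2)"

definition is_rep :: "nat \<Rightarrow> nat \<Rightarrow> (complex \<Rightarrow> 'v::ab_group_add \<Rightarrow> 'v) \<Rightarrow> (opmat \<Rightarrow> 'v \<Rightarrow> 'v) \<Rightarrow> bool" where
  "is_rep L LF sc rho \<longleftrightarrow> vector_space sc
     \<and> (\<forall>X\<in>Ghat L LF. Vector_Spaces.linear sc sc (rho X))
     \<and> (\<forall>X\<in>Ghat L LF. \<forall>Y\<in>Ghat L LF. \<forall>a b u.
          rho (\<lambda>x y. a * X x y + b * Y x y) u = sc a (rho X u) + sc b (rho Y u))
     \<and> (\<forall>X\<in>Ghat L LF. \<forall>Y\<in>Ghat L LF. \<forall>u.
          rho (brk X Y) u = rho X (rho Y u) - rho Y (rho X u))"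

definition invariant_subspace :: "nat \<Rightarrow> nat \<Rightarrow> (complex \<Rightarrow> 'v::ab_group_add \<Rightarrow> 'v) \<Rightarrow> (opmat \<Rightarrow> 'v \<Rightarrow> 'v) \<Rightarrow> 'v set \<Rightarrow> bool" where
  "invariant_subspace L LF sc rho W \<longleftrightarrow> module.subspace sc W \<and> (\<forall>X\<in>Ghat L LF. \<forall>w\<in>W. rho X w \<in> W)"

definition irreducible_rep :: "nat \<Rightarrow> nat \<Rightarrow> (complex \<Rightarrow> 'v::ab_group_add \<Rightarrow> 'v) \<Rightarrow> (opmat \<Rightarrow> 'v \<Rightarrow> 'v) \<Rightarrow> bool" where
  "irreducible_rep L LF sc rho \<longleftrightarrow> (\<exists>u::'v. u \<noteq> 0) \<and>
     (\<forall>W. invariant_subspace L LF sc rho W \<longrightarrow> W = {0} \<or> W = UNIV)"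

definition lw_rep :: "nat \<Rightarrow> nat \<Rightarrow> (complex \<Rightarrow> 'v::ab_group_add \<Rightarrow> 'v) \<Rightarrow> (opmat \<Rightarrow> 'v \<Rightarrow> 'v) \<Rightarrow> 'v \<Rightarrow> (opmat \<Rightarrow> complex) \<Rightarrow> bool" where
  "lw_rep L LF sc rho v h \<longleftrightarrow> is_rep L LF sc rho \<and> lowest_weight L LF h \<and> v \<noteq> 0
     \<and> (\<forall>W. invariant_subspace L LF sc rho W \<and> v \<in> W \<longrightarrow> W = UNIV)
     \<and> (\<forall>X\<in>Gminus L LF. rho X v = 0)
     \<and> (\<forall>H\<in>G00 L LF. rho H v = sc (h H) v)"

definition unitary_form :: "nat \<Rightarrow> nat \<Rightarrow> (complex \<Rightarrow> 'v::ab_group_add \<Rightarrow> 'v) \<Rightarrow> (opmat \<Rightarrow> 'v \<Rightarrow> 'v) \<Rightarrow> ('v \<Rightarrow> 'v \<Rightarrow> complex) \<Rightarrow> bool" where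
  "unitary_form L LF sc rho ip \<longleftrightarrow>
     (\<forall>u u' w. ip (u + u') w = ip u w + ip u' w)
     \<and> (\<forall>c u w. ip (sc c u) w = c * ip u w)
     \<and> (\<forall>u w. ip u w = cnj (ip w u))
     \<and> (\<forall>u. u \<noteq> 0 \<longrightarrow> ip u u \<in> \<real> \<and> Re (ip u u) > 0)
     \<and> (\<forall>X\<in>Ghat L LF. \<forall>u w. ip (rho X u) w = ip u (rho (omega X) w))"

end

theory Submission
  imports Defs
begin

definition eu :: "bidx \<Rightarrow> bidx \<Rightarrow> opmat" where
  "eu p q = (\<lambda>x y. if x = p \<and> y = q then 1 else 0)"

lemma mmul_eu: "mmul A (eu c d) = (\<lambda>x z. if z = d then A x c else 0)"
proof (intro ext)
  fix x z
  have "{y. eu c d y z \<noteq> 0} = (if z = d then {c} else {})"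
    by (auto simp: eu_def)
  then show "mmul A (eu c d) x z = (if z = d then A x c else 0)"
    by (simp add: mmul_def eu_def)
qed

lemma eu_mul: "mmul (eu a b) (eu c d) = (if b = c then eu a d else (\<lambda>_ _. 0))"
  unfolding mmul_eu by (auto simp: eu_def fun_eq_iff)

lemma opF_eu:
  assumes "valid_idx L LF (l1, I, l3)" "valid_idx L LF (l2, J, l4)"
  shows "opF L LF l1 l2 I J l3 l4 = eu (l1, I, l3) (l2, J, l4)"
  using assms by (auto simp: opF_def eu_def fun_eq_iff)

lemma in_cspan: "g \<in> S \<Longrightarrow> g \<in> cspan S"
  unfolding cspan_def
  by (rule CollectI, rule exI[of _ "{g}"], rule exI[of _ "\<lambda>_. 1"]) auto

lemma seq_gt_irrefl: "\<not> seq_gt x x"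
  by (auto simp: seq_gt_def)

theorem lemma14:
  fixes L LF :: nat
    and sc :: "complex \<Rightarrow> 'v::ab_group_add \<Rightarrow> 'v"
    and rho :: "opmat \<Rightarrow> 'v \<Rightarrow> 'v"
    and ip :: "'v \<Rightarrow> 'v \<Rightarrow> complex"
    and v :: 'v
    and h :: "opmat \<Rightarrow> complex"
    and I J :: "nat list"
    and l1 l2 l3 l4 :: nat
  assumes "L \<ge> 1" and "LF \<ge> 1"
    and "lw_rep L LF sc rho v h"
    and "irreducible_rep L LF sc rho"
    and "unitary_form L LF sc rho ip"
    and "valid_seq L I" and "valid_seq L J"
    and "l1 \<in> {1..LF}" and "l2 \<in> {1..LF}" and "l3 \<in> {1..LF}" and "l4 \<in> {1..LF}"
    and "seq_gt (I @ [l1, l3]) (J @ [l2, l4])"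
  shows "\<exists>n::nat. hI L LF h l2 J l4 - hI L LF h l1 I l3 = of_nat n"
proof -
  define a where "a = (l1, I, l3)"
  define b where "b = (l2, J, l4)"
  have va: "valid_idx L LF a" and vb: "valid_idx L LF b"
    using assms(6-11) by (auto simp: a_def b_def valid_idx_def)
  have ab: "a \<noteq> b"
    using assms(12) seq_gt_irrefl by (auto simp: a_def b_def)
  define E where "E = eu a b"
  define F where "F = eu b a"
  define P where "P = eu a a"
  define Q where "Q = eu b b"
  have E_op: "E = opF L LF l1 l2 I J l3 l4" using opF_eu va vb by (simp add: E_def a_def b_def)
  have F_op: "F = opF L LF l2 l1 J I l4 l3" using opF_eu va vb by (simp add: F_def a_def b_def)
  have P_op: "P = opF L LF l1 l1 I I l3 l3" using opF_eu va vb by (simp add: P_def a_def b_def)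
  have Q_op: "Q = opF L LF l2 l2 J J l4 l4" using opF_eu va vb by (simp add: Q_def a_def b_def)
  have EG: "E \<in> Ghat L LF" unfolding Ghat_def E_op
    by (rule in_cspan, unfold gens_def, rule UnI1, rule UnI1, rule UnI1) (use assms(6-11) in blast)
  have FG: "F \<in> Ghat L LF" unfolding Ghat_def F_op
    by (rule in_cspan, unfold gens_def, rule UnI1, rule UnI1, rule UnI1) (use assms(6-11) in blast)
  have PG: "P \<in> Ghat L LF" unfolding Ghat_def P_op
    by (rule in_cspan, unfold gens_def, rule UnI1, rule UnI1, rule UnI1) (use assms(6-11) in blast)
  have QG: "Q \<in> Ghat L LF" unfolding Ghat_def Q_op
    by (rule in_cspan, unfold gens_def, rule UnI1, rule UnI1, rule UnI1) (use assms(6-11) in blast)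
  have PG0: "P \<in> G00_gens L LF" unfolding P_op G00_gens_def
    by (rule UnI1, rule UnI1, rule UnI1) (use assms(6-11) in blast)
  have QG0: "Q \<in> G00_gens L LF" unfolding Q_op G00_gens_def
    by (rule UnI1, rule UnI1, rule UnI1) (use assms(6-11) in blast)
  have FGm: "F \<in> Gminus L LF" unfolding Gminus_def F_op
  proof (rule in_cspan, rule UnI1, rule UnI1, rule UnI1)
    have "length J < length I \<or> (length J = length I \<and> seq_gt (I @ [l1, l3]) (J @ [l2, l4]))"
      using assms(12) unfolding seq_gt_def by auto
    then show "opF L LF l2 l1 J I l4 l3 \<in> {opF L LF l1 l2 I J l3 l4 | l1 l2 I J l3 l4.
        l1 \<in> {1..LF} \<and> l2 \<in> {1..LF} \<and> l3 \<in> {1..LF} \<and> l4 \<in> {1..LF} \<and> valid_seq L I \<and> valid_seq L J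
        \<and> (length I < length J \<or> (length I = length J \<and> seq_gt (J @ [l2, l4]) (I @ [l1, l3])))}"
      using assms(6-11) by blast
  qed
  have rep: "is_rep L LF sc rho" and lw: "lowest_weight L LF h" and vnz: "v \<noteq> 0"
    and kill: "\<forall>X\<in>Gminus L LF. rho X v = 0" and wt: "\<forall>H\<in>G00 L LF. rho H v = sc (h H) v"
    using assms(3) by (auto simp: lw_rep_def)
  have vs: "vector_space sc" using rep by (simp add: is_rep_def)
  interpret vs: vector_space sc by (rule vs)
  have lin: "\<And>X c u. X \<in> Ghat L LF \<Longrightarrow> rho X (sc c u) = sc c (rho X u)"
    and ladd: "\<And>X u u'. X \<in> Ghat L LF \<Longrightarrow> rho X (u + u') = rho X u + rho X u'"
    using rep unfolding is_rep_def Vector_Spaces.linear_iff by blast+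
  have l0: "\<And>X. X \<in> Ghat L LF \<Longrightarrow> rho X 0 = 0"
    using lin[of _ 0 0] by simp
  have comb: "\<And>X Y c d u. X \<in> Ghat L LF \<Longrightarrow> Y \<in> Ghat L LF \<Longrightarrow>
      rho (\<lambda>x y. c * X x y + d * Y x y) u = sc c (rho X u) + sc d (rho Y u)"
    using rep by (simp add: is_rep_def)
  have comm: "\<And>X Y u. X \<in> Ghat L LF \<Longrightarrow> Y \<in> Ghat L LF \<Longrightarrow>
      rho (brk X Y) u = rho X (rho Y u) - rho Y (rho X u)"
    using rep by (simp add: is_rep_def)
  have bEF: "brk E F = (\<lambda>x y. 1 * P x y + (-1) * Q x y)"
    unfolding brk_def E_def F_def P_def Q_def eu_mul by simp
  have bPE: "brk P E = (\<lambda>x y. 1 * E x y + 0 * E x y)"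
    using ab unfolding brk_def E_def P_def eu_mul by simp
  have bQE: "brk Q E = (\<lambda>x y. (-1) * E x y + 0 * E x y)"
    using ab unfolding brk_def E_def Q_def eu_mul by simp
  have rEF: "\<And>u. rho E (rho F u) - rho F (rho E u) = rho P u - rho Q u"
  proof -
    fix u
    have "rho (brk E F) u = rho P u - rho Q u"
      unfolding bEF comb[OF PG QG] by (simp add: vs.scale_minus_left)
    then show "rho E (rho F u) - rho F (rho E u) = rho P u - rho Q u"
      using comm[OF EG FG] by simp
  qed
  have rPE: "\<And>u. rho P (rho E u) = rho E (rho P u) + rho E u"
  proof -
    fix u
    have "rho (brk P E) u = rho E u"
      unfolding bPE comb[OF EG EG] by simp
    then show "rho P (rho E u) = rho E (rho P u) + rho E u"
      using comm[OF PG EG, of u] by (simp add: algebra_simps)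
  qed
  have rQE: "\<And>u. rho Q (rho E u) = rho E (rho Q u) - rho E u"
  proof -
    fix u
    have "rho (brk Q E) u = - rho E u"
      unfolding bQE comb[OF EG EG] by (simp add: vs.scale_minus_left)
    then show "rho Q (rho E u) = rho E (rho Q u) - rho E u"
      using comm[OF QG EG, of u] by (simp add: algebra_simps)
  qed
  define hP where "hP = h P"
  define hQ where "hQ = h Q"
  have hPr: "hP \<in> \<real>" and hQr: "hQ \<in> \<real>"
    using lw PG0 QG0 unfolding lowest_weight_def hP_def hQ_def by blast+
  have PG00: "P \<in> G00 L LF" unfolding G00_def by (rule in_cspan[OF PG0])
  have QG00: "Q \<in> G00 L LF" unfolding G00_def by (rule in_cspan[OF QG0])
  have Pv: "rho P v = sc hP v" using wt PG00 unfolding hP_def by blast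
  have Qv: "rho Q v = sc hQ v" using wt QG00 unfolding hQ_def by blast
  have Fv: "rho F v = 0" using kill FGm by blast
  define w where "w k = (rho E ^^ k) v" for k
  have wS: "w (Suc k) = rho E (w k)" for k by (simp add: w_def)
  have wP: "rho P (w k) = sc (hP + of_nat k) (w k)" for k
  proof (induction k)
    case 0 then show ?case by (simp add: w_def Pv)
  next
    case (Suc k)
    show ?case unfolding wS rPE Suc lin[OF EG]
      by (simp add: vs.scale_left_distrib algebra_simps)
  qed
  have wQ: "rho Q (w k) = sc (hQ - of_nat k) (w k)" for k
  proof (induction k)
    case 0 then show ?case by (simp add: w_def Qv)
  next
    case (Suc k)
    show ?case unfolding wS rQE Suc lin[OF EG]
      by (simp add: vs.scale_left_diff_distrib algebra_simps)
  qed
  define m where "m = hQ - hP"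
  define c where "c k = of_nat k * (m - of_nat k + 1)" for k :: nat
  have wF: "rho F (w (Suc k)) = sc (c (Suc k)) (w k)" for k
  proof (induction k)
    case 0
    have "rho F (rho E v) = rho E (rho F v) - (rho P v - rho Q v)"
      using rEF[of v] by (simp add: algebra_simps)
    also have "\<dots> = sc m v"
      by (simp add: Fv l0[OF EG] Pv Qv m_def vs.scale_left_diff_distrib)
    finally show ?case by (simp add: w_def c_def)
  next
    case (Suc k)
    have "rho F (w (Suc (Suc k))) = rho E (rho F (w (Suc k))) - (rho P (w (Suc k)) - rho Q (w (Suc k)))"
      using rEF[of "w (Suc k)"] wS[of "Suc k"] by (simp add: algebra_simps)
    also have "\<dots> = sc (c (Suc k)) (w (Suc k)) - (sc (hP + of_nat (Suc k)) (w (Suc k)) - sc (hQ - of_nat (Suc k)) (w (Suc k)))"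
      by (simp only: Suc wP wQ lin[OF EG] wS[symmetric])
    also have "\<dots> = sc (c (Suc k) - ((hP + of_nat (Suc k)) - (hQ - of_nat (Suc k)))) (w (Suc k))"
      by (simp only: vs.scale_left_diff_distrib)
    also have "c (Suc k) - ((hP + of_nat (Suc k)) - (hQ - of_nat (Suc k))) = c (Suc (Suc k))"
      by (simp add: c_def m_def algebra_simps)
    finally show ?case .
  qed
  have ipscl: "\<And>z u w'. ip (sc z u) w' = z * ip u w'"
    and ipcnj: "\<And>u w'. ip u w' = cnj (ip w' u)"
    and ippos: "\<And>u. u \<noteq> 0 \<Longrightarrow> ip u u \<in> \<real> \<and> Re (ip u u) > 0"
    and ipom: "\<And>X u w'. X \<in> Ghat L LF \<Longrightarrow> ip (rho X u) w' = ip u (rho (omega X) w')"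
    using assms(5) unfolding unitary_form_def by blast+
  have ipr: "ip u (sc z w') = cnj z * ip u w'" for u w' z
  proof -
    have "ip u (sc z w') = cnj (ip (sc z w') u)" by (rule ipcnj)
    also have "\<dots> = cnj (z * ip w' u)" by (simp only: ipscl)
    also have "\<dots> = cnj z * cnj (ip w' u)" by simp
    also have "cnj (ip w' u) = ip u w'" by (rule ipcnj[symmetric])
    finally show ?thesis .
  qed
  have omE: "omega E = F"
    by (auto simp: omega_def E_def F_def eu_def fun_eq_iff)
  have mr: "m \<in> \<real>" using hPr hQr by (simp add: m_def)
  have cr: "c k \<in> \<real>" for k using mr by (simp add: c_def)
  have cnjc: "cnj (c k) = c k" for k using cr by (simp add: Reals_cnj_iff)
  have norm: "ip (w (Suc k)) (w (Suc k)) = c (Suc k) * ip (w k) (w k)" for k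
  proof -
    have "ip (w (Suc k)) (w (Suc k)) = ip (w k) (rho (omega E) (w (Suc k)))"
      unfolding wS[of k] by (rule ipom[OF EG])
    also have "\<dots> = ip (w k) (sc (c (Suc k)) (w k))" unfolding omE wF ..
    finally show ?thesis by (simp only: ipr cnjc)
  qed
  have goal_eq: "hI L LF h l2 J l4 - hI L LF h l1 I l3 = m"
    by (simp add: hI_def m_def hP_def hQ_def P_op Q_op)
  show ?thesis
  proof (rule ccontr)
    assume nn: "\<not> (\<exists>n::nat. hI L LF h l2 J l4 - hI L LF h l1 I l3 = of_nat n)"
    have cnz: "c (Suc k) \<noteq> 0" for k
    proof
      assume "c (Suc k) = 0"
      moreover have "of_nat (Suc k) \<noteq> (0::complex)" by (rule of_nat_neq_0)
      ultimately have "m = of_nat k" by (simp add: c_def)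
      then show False using nn unfolding goal_eq by blast
    qed
    have wnz: "w k \<noteq> 0" for k
    proof (induction k)
      case 0 then show ?case using vnz by (simp add: w_def)
    next
      case (Suc k)
      show ?case
      proof
        assume "w (Suc k) = 0"
        then have "sc (c (Suc k)) (w k) = 0" using wF[of k] l0[OF FG] by simp
        then show False using cnz Suc by simp
      qed
    qed
    define r where "r = Re m"
    have mre: "m = of_real r" using mr by (simp add: r_def Reals_def) 
    have "r > of_nat k" for k
    proof -
      have p1: "ip (w k) (w k) \<in> \<real>" "Re (ip (w k) (w k)) > 0"
        and p2: "Re (ip (w (Suc k)) (w (Suc k))) > 0"
        using ippos wnz by auto
      have "Re (ip (w (Suc k)) (w (Suc k))) = Re (c (Suc k)) * Re (ip (w k) (w k))"
      proof -
        obtain x where x: "ip (w k) (w k) = of_real x" using p1(1) by (auto elim: Reals_cases)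
        obtain y where y: "c (Suc k) = of_real y" using cr[of "Suc k"] by (auto elim: Reals_cases)
        show ?thesis unfolding norm[of k] x y by simp
      qed
      also have "Re (c (Suc k)) = (real k + 1) * (r - real k)"
        by (simp add: c_def mre)
      finally have "0 < (real k + 1) * (r - real k) * Re (ip (w k) (w k))" using p2 by simp
      then have "0 < (real k + 1) * (r - real k)" using p1(2)
        by (simp add: zero_less_mult_iff)
      then show ?thesis by (simp add: zero_less_mult_iff)
    qed
    from this[of "nat \<lceil>r\<rceil>"] show False by linarith
  qed
qed

end
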